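(* Let $\mathbb{K}$ be a field and $\Delta$ a simplicial complex on vertex set $[n]$ of dimension $d>0$ such that $f_{d-1}\ge f_d$ and $\tilde H_d(\Delta;\mathbb{K})\neq0$. Let $J=I_\Delta+(x_1^{d+2},\dots,x_n^{d+2})\subset R=\mathbb{K}[x_1,\dots,x_n]$. Then $R/J$ fails the weak Lefschetz property.
   Context: $f_i$ is the number of $i$-dimensional faces of $\Delta$; $I_\Delta=(\prod_{i\in\tau}x_i:\tau\notin\Delta)$ is the Stanley–Reisner ideal. An artinian graded algebra $A$ with top nonzero degree $D$ has the weak Lefschetz property (WLP) if there is a linear form $\ell$ such that multiplication $\times\ell:A_i\to A_{i+1}$ has full rank (injective or surjective) for every $i<D$. *)

theory Defs
  imports Main "HOL-Library.Poly_Mapping"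
begin

definition simplicial_complex :: "nat \<Rightarrow> nat set set \<Rightarrow> bool" where
  "simplicial_complex n \<Delta> \<longleftrightarrow>
     \<Delta> \<noteq> {} \<and> (\<forall>F\<in>\<Delta>. F \<subseteq> {1..n}) \<and>
     (\<forall>F\<in>\<Delta>. \<forall>G. G \<subseteq> F \<longrightarrow> G \<in> \<Delta>) \<and>
     (\<forall>i\<in>{1..n}. {i} \<in> \<Delta>)"

definition sc_dim :: "nat set set \<Rightarrow> nat" where
  "sc_dim \<Delta> = Max (card ` \<Delta>) - 1"

definition fvec :: "nat set set \<Rightarrow> nat \<Rightarrow> nat" where
  "fvec \<Delta> i = card {F\<in>\<Delta>. card F = i + 1}"

text \<open>Including the empty face (dimension -1)
  in the chain complex (via k-chains with k+1 = 0 being never used, and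
  (k-1)-faces of cardinality k with k = 0 being the empty face) gives
  the augmented complex, hence reduced homology.\<close>
definition is_chain :: "nat set set \<Rightarrow> nat \<Rightarrow> (nat set \<Rightarrow> 'k::field) \<Rightarrow> bool" where
  "is_chain \<Delta> k c \<longleftrightarrow> (\<forall>F. c F \<noteq> 0 \<longrightarrow> F \<in> \<Delta> \<and> card F = k + 1)"

text \<open>Boundary of a k-chain, a (k-1)-chain (cardinality-k faces): for an oriented
  simplex [v_0 < ... < v_k], the boundary is sum_j (-1)^j [.. omit v_j ..].\<close>
definition boundary :: "nat set set \<Rightarrow> nat \<Rightarrow> (nat set \<Rightarrow> 'k::field) \<Rightarrow> (nat set \<Rightarrow> 'k)" where
  "boundary \<Delta> k c = (\<lambda>G. if G \<in> \<Delta> \<and> card G = k then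
      (\<Sum>v\<in>\<Union>\<Delta> - G. if insert v G \<in> \<Delta>
          then (-1) ^ card {u\<in>G. u < v} * c (insert v G) else 0)
      else 0)"

definition reduced_homology_nonzero :: "'k::field itself \<Rightarrow> nat set set \<Rightarrow> nat \<Rightarrow> bool" where
  "reduced_homology_nonzero _ \<Delta> k \<longleftrightarrow>
     (\<exists>z :: nat set \<Rightarrow> 'k. is_chain \<Delta> k z \<and> boundary \<Delta> k z = (\<lambda>_. 0) \<and>
        \<not> (\<exists>b :: nat set \<Rightarrow> 'k. is_chain \<Delta> (k + 1) b \<and> boundary \<Delta> (k + 1) b = z))"

type_synonym 'k mpoly = "(nat \<Rightarrow>\<^sub>0 nat) \<Rightarrow>\<^sub>0 'k"

definition Var :: "nat \<Rightarrow> 'k::comm_ring_1 mpoly" where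
  "Var i = Poly_Mapping.single (Poly_Mapping.single i 1) 1"

definition mon_deg :: "(nat \<Rightarrow>\<^sub>0 nat) \<Rightarrow> nat" where
  "mon_deg m = (\<Sum>i\<in>Poly_Mapping.keys m. Poly_Mapping.lookup m i)"

definition in_R :: "nat \<Rightarrow> 'k::comm_ring_1 mpoly \<Rightarrow> bool" where
  "in_R n p \<longleftrightarrow> (\<forall>m\<in>Poly_Mapping.keys p. Poly_Mapping.keys m \<subseteq> {1..n})"

definition R_deg :: "nat \<Rightarrow> nat \<Rightarrow> 'k::comm_ring_1 mpoly set" where
  "R_deg n i = {p. in_R n p \<and> (\<forall>m\<in>Poly_Mapping.keys p. mon_deg m = i)}"

definition ideal_gen :: "nat \<Rightarrow> 'k::comm_ring_1 mpoly set \<Rightarrow> 'k mpoly set" where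
  "ideal_gen n G = {p. \<exists>S r. finite S \<and> S \<subseteq> G \<and> (\<forall>g\<in>S. in_R n (r g)) \<and>
                          p = (\<Sum>g\<in>S. r g * g)}"

definition SR_gens :: "nat \<Rightarrow> nat set set \<Rightarrow> 'k::comm_ring_1 mpoly set" where
  "SR_gens n \<Delta> = {(\<Prod>i\<in>\<tau>. Var i) | \<tau>. \<tau> \<subseteq> {1..n} \<and> \<tau> \<notin> \<Delta>}"

definition SR_ideal :: "nat \<Rightarrow> nat set set \<Rightarrow> 'k::comm_ring_1 mpoly set" where
  "SR_ideal n \<Delta> = ideal_gen n (SR_gens n \<Delta>)"

definition quot_nonzero_deg :: "nat \<Rightarrow> 'k::comm_ring_1 mpoly set \<Rightarrow> nat \<Rightarrow> bool" where
  "quot_nonzero_deg n J i \<longleftrightarrow> (\<exists>f\<in>R_deg n i. f \<notin> J)"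

definition top_degree :: "nat \<Rightarrow> 'k::comm_ring_1 mpoly set \<Rightarrow> nat" where
  "top_degree n J = (GREATEST i. quot_nonzero_deg n J i)"

definition mult_injective :: "nat \<Rightarrow> 'k::comm_ring_1 mpoly set \<Rightarrow> 'k mpoly \<Rightarrow> nat \<Rightarrow> bool" where
  "mult_injective n J l i \<longleftrightarrow> (\<forall>f\<in>R_deg n i. l * f \<in> J \<longrightarrow> f \<in> J)"

definition mult_surjective :: "nat \<Rightarrow> 'k::comm_ring_1 mpoly set \<Rightarrow> 'k mpoly \<Rightarrow> nat \<Rightarrow> bool" where
  "mult_surjective n J l i \<longleftrightarrow> (\<forall>g\<in>R_deg n (i + 1). \<exists>f\<in>R_deg n i. g - l * f \<in> J)"

definition has_WLP :: "nat \<Rightarrow> 'k::comm_ring_1 mpoly set \<Rightarrow> bool" where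
  "has_WLP n J \<longleftrightarrow> (\<exists>l\<in>R_deg n 1. \<forall>i < top_degree n J.
       mult_injective n J l i \<or> mult_surjective n J l i)"

end

theory Submission
  imports Defs "Jordan_Normal_Form.Determinant"
begin

abbreviation lk where "lk \<equiv> Poly_Mapping.lookup"
abbreviation ks where "ks \<equiv> Poly_Mapping.keys"
abbreviation sg where "sg \<equiv> Poly_Mapping.single"

lemma keys_add_nat: "ks (a + b :: 'a \<Rightarrow>\<^sub>0 nat) = ks a \<union> ks b"
  by (auto simp: in_keys_iff lookup_add)

lemma poly_expand: "p = (\<Sum>k\<in>ks p. sg k (lk p k))"
  by (rule poly_mapping_eqI) (auto simp: lookup_sum lookup_single when_def in_keys_iff
      intro: sum.neutral elim: sum.mono_neutral_left[THEN sym, rotated 2]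
      simp flip: sum.delta[where S = "ks p"])

lemma in_R_0[simp]: "in_R n 0" by (simp add: in_R_def)
lemma in_R_add: "in_R n p \<Longrightarrow> in_R n q \<Longrightarrow> in_R n (p + q)"
  unfolding in_R_def using keys_add[of p q] by blast
lemma in_R_mult: "in_R n p \<Longrightarrow> in_R n q \<Longrightarrow> in_R n (p * q)"
  unfolding in_R_def
proof (intro ballI)
  fix m assume a: "\<forall>m\<in>ks p. ks m \<subseteq> {1..n}" "\<forall>m\<in>ks q. ks m \<subseteq> {1..n}" and m: "m \<in> ks (p * q)"
  then obtain x y where "m = x + y" "x \<in> ks p" "y \<in> ks q" using keys_mult[of p q] by blast
  then show "ks m \<subseteq> {1..n}" using a by (simp add: keys_add_nat)
qed
lemma in_R_single: "ks m \<subseteq> {1..n} \<Longrightarrow> in_R n (sg m c)"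
  unfolding in_R_def by simp
lemma in_R_sum: "(\<And>x. x \<in> A \<Longrightarrow> in_R n (f x)) \<Longrightarrow> in_R n (sum f A)"
  by (induction A rule: infinite_finite_induct) (auto intro: in_R_add)

lemma ideal_gen_0: "0 \<in> ideal_gen n G"
  unfolding ideal_gen_def by (rule CollectI, rule exI[of _ "{}"]) auto

lemma ideal_gen_add:
  assumes "p \<in> ideal_gen n G" "q \<in> ideal_gen n G" shows "p + q \<in> ideal_gen n G"
proof -
  obtain S1 r1 where 1: "finite S1" "S1 \<subseteq> G" "\<forall>g\<in>S1. in_R n (r1 g)" "p = (\<Sum>g\<in>S1. r1 g * g)"
    using assms(1) unfolding ideal_gen_def by blast
  obtain S2 r2 where 2: "finite S2" "S2 \<subseteq> G" "\<forall>g\<in>S2. in_R n (r2 g)" "q = (\<Sum>g\<in>S2. r2 g * g)"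
    using assms(2) unfolding ideal_gen_def by blast
  define r where "r g = (if g \<in> S1 then r1 g else 0) + (if g \<in> S2 then r2 g else 0)" for g
  have e: "r g * g = (if g \<in> S1 then r1 g * g else 0) + (if g \<in> S2 then r2 g * g else 0)" for g
    unfolding r_def by (simp add: distrib_right)
  have "(\<Sum>g\<in>S1 \<union> S2. r g * g) = (\<Sum>g\<in>S1 \<union> S2. (if g \<in> S1 then r1 g * g else 0))
      + (\<Sum>g\<in>S1 \<union> S2. (if g \<in> S2 then r2 g * g else 0))"
    unfolding e by (simp only: sum.distrib)
  also have "\<dots> = p + q"
    using 1 2 by (simp add: sum.If_cases Int_absorb1)
  finally have "p + q = (\<Sum>g\<in>S1 \<union> S2. r g * g)" by simp
  moreover have "\<forall>g\<in>S1 \<union> S2. in_R n (r g)" using 1 2 unfolding r_def by (auto intro: in_R_add)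
  moreover have "finite (S1 \<union> S2)" "S1 \<union> S2 \<subseteq> G" using 1 2 by auto
  ultimately show ?thesis unfolding ideal_gen_def mem_Collect_eq
    by (intro exI[of _ "S1 \<union> S2"] exI[of _ r]) simp
qed

lemma ideal_gen_gen:
  assumes "g \<in> G" "in_R n q" shows "q * g \<in> ideal_gen n G"
  unfolding ideal_gen_def using assms
  by (intro CollectI exI[of _ "{g}"] exI[of _ "\<lambda>_. q"]) auto

lemma ideal_gen_sum:
  "(\<And>x. x \<in> A \<Longrightarrow> f x \<in> ideal_gen n G) \<Longrightarrow> sum f A \<in> ideal_gen n G"
  by (induction A rule: infinite_finite_induct) (auto intro: ideal_gen_add ideal_gen_0)

lemma ideal_gen_keys:
  assumes "\<forall>g\<in>G. \<forall>k\<in>ks g. P k" and "\<forall>a k. P k \<longrightarrow> P (a + k)"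
    and "p \<in> ideal_gen n G" and "k \<in> ks p"
  shows "P k"
proof -
  obtain S r where 1: "finite S" "S \<subseteq> G" "p = (\<Sum>g\<in>S. r g * g)"
    using assms(3) unfolding ideal_gen_def by blast
  have "k \<in> (\<Union>g\<in>S. ks (r g * g))" using assms(4) 1(3) keys_sum[of "\<lambda>g. r g * g" S] by blast
  then obtain g where g: "g \<in> S" "k \<in> ks (r g * g)" by blast
  then obtain a b where ab: "k = a + b" "b \<in> ks g" using keys_mult[of "r g" g] by blast
  have "g \<in> G" using g(1) 1(2) by blast
  then have "P b" using assms(1) ab(2) by blast
  then show ?thesis using assms(2) ab(1) by blast
qed

section \<open>The monomial ideal J\<close>

definition std :: "nat set set \<Rightarrow> nat \<Rightarrow> (nat \<Rightarrow>\<^sub>0 nat) \<Rightarrow> bool" where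
  "std \<Delta> d m \<longleftrightarrow> ks m \<in> \<Delta> \<and> (\<forall>i. lk m i \<le> d + 1)"

definition ind :: "nat set \<Rightarrow> (nat \<Rightarrow>\<^sub>0 nat)" where
  "ind \<tau> = (\<Sum>i\<in>\<tau>. sg i 1)"

lemma lookup_ind: "finite \<tau> \<Longrightarrow> lk (ind \<tau>) i = (if i \<in> \<tau> then 1 else 0)"
  unfolding ind_def by (simp add: lookup_sum lookup_single when_def)

lemma keys_ind: "finite \<tau> \<Longrightarrow> ks (ind \<tau>) = \<tau>"
  by (auto simp: in_keys_iff lookup_ind split: if_splits)

lemma prod_Var: "finite \<tau> \<Longrightarrow> (\<Prod>i\<in>\<tau>. Var i) = (sg (ind \<tau>) 1 :: 'k::comm_ring_1 mpoly)"
proof (induction \<tau> rule: finite_induct)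
  case empty then show ?case by (simp add: ind_def)
next
  case (insert x F)
  then show ?case by (simp add: ind_def Var_def mult_single)
qed

lemma Var_power: "(Var i ^ k :: 'k::comm_ring_1 mpoly) = sg (sg i k) 1"
  by (induction k) (auto simp: Var_def mult_single single_add[symmetric] add.commute)

lemma sc_down: "simplicial_complex n \<Delta> \<Longrightarrow> F \<in> \<Delta> \<Longrightarrow> G \<subseteq> F \<Longrightarrow> G \<in> \<Delta>"
  unfolding simplicial_complex_def by blast

lemma sc_sub: "simplicial_complex n \<Delta> \<Longrightarrow> F \<in> \<Delta> \<Longrightarrow> F \<subseteq> {1..n}"
  unfolding simplicial_complex_def by auto

definition Gens :: "nat \<Rightarrow> nat set set \<Rightarrow> nat \<Rightarrow> 'k::comm_ring_1 mpoly set" where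
  "Gens n \<Delta> d = SR_gens n \<Delta> \<union> {Var i ^ (d + 2) | i. i \<in> {1..n}}"

lemma nonstd_up:
  assumes "simplicial_complex n \<Delta>" "\<not> std \<Delta> d k" shows "\<not> std \<Delta> d (a + k)"
proof
  assume h: "std \<Delta> d (a + k)"
  have "ks k \<subseteq> ks (a + k)" by (simp add: keys_add_nat)
  then have "ks k \<in> \<Delta>" using h sc_down[OF assms(1)] unfolding std_def by blast
  moreover have "lk k i \<le> d + 1" for i using h unfolding std_def
    by (metis le_add2 lookup_add order_trans)
  ultimately show False using assms(2) unfolding std_def by blast
qed

lemma J_keys_nonstd:
  assumes "simplicial_complex n \<Delta>" "(p :: 'k::comm_ring_1 mpoly) \<in> ideal_gen n (Gens n \<Delta> d)"
    "k \<in> ks p"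
  shows "\<not> std \<Delta> d k"
proof (rule ideal_gen_keys[OF _ _ assms(2,3)])
  show "\<forall>a k. \<not> std \<Delta> d k \<longrightarrow> \<not> std \<Delta> d (a + k)" using nonstd_up[OF assms(1)] by blast
  show "\<forall>g\<in>(Gens n \<Delta> d :: 'k mpoly set). \<forall>k\<in>ks g. \<not> std \<Delta> d k"
  proof (intro ballI)
    fix g :: "'k mpoly" and k assume g: "g \<in> Gens n \<Delta> d" and k: "k \<in> ks g"
    show "\<not> std \<Delta> d k"
    proof (cases "g \<in> SR_gens n \<Delta>")
      case True
      then obtain \<tau> where t: "\<tau> \<subseteq> {1..n}" "\<tau> \<notin> \<Delta>" "g = (\<Prod>i\<in>\<tau>. Var i)"
        unfolding SR_gens_def by blast
      have ft: "finite \<tau>" using t(1) finite_subset by blast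
      have "g = sg (ind \<tau>) (1::'k)" using t(3) prod_Var[OF ft, where 'k='k] by simp
      then have "k = ind \<tau>" using k by (simp split: if_splits)
      then show ?thesis using t(2) keys_ind[OF ft] unfolding std_def by simp
    next
      case False
      then obtain i where "g = Var i ^ (d + 2)" using g unfolding Gens_def by blast
      then have "g = sg (sg i (d + 2)) (1::'k)" by (simp only: Var_power)
      then have "k = sg i (d + 2)" using k by (simp split: if_splits)
      then have "lk k i = d + 2" by simp
      then have "\<not> lk k i \<le> d + 1" by simp
      then show ?thesis unfolding std_def by blast
    qed
  qed
qed

lemma single_nonstd_in_J:
  assumes sc: "simplicial_complex n \<Delta>" and m: "ks m \<subseteq> {1..n}" "\<not> std \<Delta> d m"
  shows "(sg m c :: 'k::comm_ring_1 mpoly) \<in> ideal_gen n (Gens n \<Delta> d)"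
proof -
  have "\<exists>\<mu>. (sg \<mu> 1 :: 'k mpoly) \<in> Gens n \<Delta> d \<and> (\<forall>i. lk \<mu> i \<le> lk m i)"
  proof (cases "ks m \<in> \<Delta>")
    case False
    have fm: "finite (ks m)" by simp
    have "(sg (ind (ks m)) 1 :: 'k mpoly) \<in> SR_gens n \<Delta>"
    proof -
      have eq: "(\<Prod>i\<in>ks m. Var i) = (sg (ind (ks m)) 1 :: 'k mpoly)" by (rule prod_Var[OF fm])
      show ?thesis unfolding SR_gens_def mem_Collect_eq
        by (rule exI[of _ "ks m"]) (use eq False m(1) in simp)
    qed
    moreover have "lk (ind (ks m)) i \<le> lk m i" for i
    proof (cases "i \<in> ks m")
      case True then show ?thesis by (simp add: lookup_ind in_keys_iff Suc_leI)
    next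
      case False then show ?thesis by (simp add: lookup_ind)
    qed
    ultimately show ?thesis unfolding Gens_def by blast
  next
    case True
    then obtain i where i: "lk m i > d + 1" using m(2) unfolding std_def by (meson not_le)
    then have "i \<in> ks m" by (simp add: in_keys_iff)
    then have "i \<in> {1..n}" using m(1) by blast
    then have "(sg (sg i (d+2)) 1 :: 'k mpoly) \<in> Gens n \<Delta> d"
      unfolding Gens_def using Var_power[of i "d+2", where 'k='k, symmetric] by blast
    moreover have "lk (sg i (d+2)) j \<le> lk m j" for j
      using i by (auto simp: lookup_single when_def)
    ultimately show ?thesis by blast
  qed
  then obtain \<mu> where mu: "(sg \<mu> 1 :: 'k mpoly) \<in> Gens n \<Delta> d" "\<forall>i. lk \<mu> i \<le> lk m i" by blast
  have eq: "(m - \<mu>) + \<mu> = m"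
    by (rule poly_mapping_eqI) (simp add: lookup_add lookup_minus mu(2))
  have "ks (m - \<mu>) \<subseteq> ks m" by (auto simp: in_keys_iff lookup_minus)
  then have "in_R n (sg (m - \<mu>) c :: 'k mpoly)" using m(1) by (intro in_R_single) blast
  then have "sg (m - \<mu>) c * sg \<mu> 1 \<in> ideal_gen n (Gens n \<Delta> d)"
    by (rule ideal_gen_gen[OF mu(1)])
  moreover have "sg (m - \<mu>) c * sg \<mu> (1::'k) = sg m c"
    unfolding mult_single eq by simp
  ultimately show ?thesis by simp
qed

lemma nonstd_in_J:
  assumes sc: "simplicial_complex n \<Delta>" and "in_R n (p :: 'k::comm_ring_1 mpoly)"
    and "\<forall>k\<in>ks p. \<not> std \<Delta> d k"
  shows "p \<in> ideal_gen n (Gens n \<Delta> d)"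
  apply (subst poly_expand)
  apply (rule ideal_gen_sum)
  apply (rule single_nonstd_in_J[OF sc])
  using assms(2,3) unfolding in_R_def by auto

fun NN :: "nat \<Rightarrow> nat \<Rightarrow> int \<Rightarrow> nat" where
  "NN d 0 x = (if x = 0 then 1 else 0)"
| "NN d (Suc s) x = (\<Sum>j\<in>{1..d+1}. NN d s (x - int j))"

lemma NN_sym: "NN d s x = NN d s (int s * (int d + 2) - x)"
proof (induction s arbitrary: x)
  case 0 then show ?case by simp
next
  case (Suc s)
  have "NN d (Suc s) (int (Suc s) * (int d + 2) - x) =
     (\<Sum>j\<in>{1..d+1}. NN d s (int (Suc s) * (int d + 2) - x - int j))" by simp
  also have "\<dots> = (\<Sum>j\<in>{1..d+1}. NN d s (x - int (d + 2 - j)))"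
  proof (rule sum.cong[OF refl])
    fix j assume j: "j \<in> {1..d+1}"
    have e: "int s * (int d + 2) - (x - int (d + 2 - j)) = int (Suc s) * (int d + 2) - x - int j"
      using j by (simp add: algebra_simps of_nat_diff)
    show "NN d s (int (Suc s) * (int d + 2) - x - int j) = NN d s (x - int (d + 2 - j))"
      using Suc.IH[of "x - int (d + 2 - j)"] unfolding e by simp
  qed
  also have "\<dots> = (\<Sum>j\<in>{1..d+1}. NN d s (x - int j))"
    by (rule sum.reindex_bij_witness[where i = "\<lambda>j. d + 2 - j" and j = "\<lambda>j. d + 2 - j"]) auto
  finally show ?case by simp
qed

lemma NN_step: "int (NN d (Suc s) (x + 1)) - int (NN d (Suc s) x) = int (NN d s x) - int (NN d s (x - int d - 1))"
proof -
  have a: "{1..d+1} = insert 1 {2..d+1}" by auto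
  have b: "{1..d+1} = insert (d+1) {1..d}" by auto
  have "NN d (Suc s) (x + 1) = NN d s x + (\<Sum>j\<in>{2..d+1}. NN d s (x + 1 - int j))"
    by (simp only: NN.simps a, simp)
  moreover have "(\<Sum>j\<in>{2..d+1}. NN d s (x + 1 - int j)) = (\<Sum>j\<in>{1..d}. NN d s (x - int j))"
    by (rule sum.reindex_bij_witness[where i = "\<lambda>j. j + 1" and j = "\<lambda>j. j - 1"]) (auto simp: of_nat_diff algebra_simps)
  moreover have "NN d (Suc s) x = NN d s (x - int d - 1) + (\<Sum>j\<in>{1..d}. NN d s (x - int j))"
    by (simp only: NN.simps b, simp add: algebra_simps)
  ultimately show ?thesis by simp
qed

definition NNmono :: "nat \<Rightarrow> nat \<Rightarrow> bool" where
  "NNmono d s \<longleftrightarrow> (\<forall>x. 2 * x \<ge> int s * (int d + 2) \<longrightarrow> NN d s (x + 1) \<le> NN d s x)"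

lemma NN_chain:
  assumes "NNmono d s" "2 * y \<ge> int s * (int d + 2)"
  shows "NN d s (y + int k) \<le> NN d s y"
proof (induction k)
  case 0 then show ?case by simp
next
  case (Suc k)
  have "NN d s (y + int k + 1) \<le> NN d s (y + int k)"
    using assms unfolding NNmono_def by (metis add_increasing2 mult_2 of_nat_0_le_iff order.trans le_add_same_cancel1
        add_mono)
  moreover have "y + int (Suc k) = y + int k + 1" by simp
  ultimately show ?case using Suc by (metis order_trans)
qed

lemma NN_chain':
  assumes "NNmono d s" "2 * y \<ge> int s * (int d + 2)" "y \<le> z"
  shows "NN d s z \<le> NN d s y"
  using NN_chain[OF assms(1,2), of "nat (z - y)"] assms(3) by simp

lemma NN_mono_all: "NNmono d s"
proof (induction s)
  case 0 then show ?case unfolding NNmono_def by simp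
next
  case (Suc s)
  show ?case unfolding NNmono_def
  proof (intro allI impI)
    fix x assume x: "2 * x \<ge> int (Suc s) * (int d + 2)"
    have "NN d s x \<le> NN d s (x - int d - 1)"
    proof (cases "2 * (x - int d - 1) \<ge> int s * (int d + 2)")
      case True
      then show ?thesis using NN_chain'[OF Suc True] by simp
    next
      case False
      define u where "u = int s * (int d + 2) - (x - int d - 1)"
      have "NN d s (x - int d - 1) = NN d s u" unfolding u_def using NN_sym by metis
      moreover have "NN d s x \<le> NN d s u"
        apply (rule NN_chain'[OF Suc]) using False x unfolding u_def by (auto simp: algebra_simps)
      ultimately show ?thesis by simp
    qed
    then show "NN d (Suc s) (x + 1) \<le> NN d (Suc s) x" using NN_step[of d s x] by linarith
  qed
qed

lemma NN_mono: "2 * x \<ge> int s * (int d + 2) \<Longrightarrow> NN d s (x + 1) \<le> NN d s x"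
  using NN_mono_all unfolding NNmono_def by blast

lemma NN_key:
  assumes "2 * T = (int d + 1) * (int d + 2)"
  shows "int (NN d (Suc d) (T - 1)) - int (NN d (Suc d) T) = - (int (NN d d (T - 1)) - int (NN d d T))"
proof -
  have "NN d d T = NN d d (int d * (int d + 2) - T)" using NN_sym by metis
  also have "int d * (int d + 2) - T = T - 1 - int d - 1" using assms by (simp add: algebra_simps)
  finally have "NN d d T = NN d d (T - 1 - int d - 1)" .
  then show ?thesis using NN_step[of d d "T - 1"] by simp
qed

lemma mon_deg_sum: "finite A \<Longrightarrow> ks m \<subseteq> A \<Longrightarrow> mon_deg m = (\<Sum>i\<in>A. lk m i)"
  unfolding mon_deg_def by (rule sum.mono_neutral_left) (auto simp: in_keys_iff)

lemma mon_deg_add: "mon_deg (a + b) = mon_deg a + mon_deg b"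
proof -
  have f: "finite (ks a \<union> ks b)" by simp
  show ?thesis
    using mon_deg_sum[OF f, of "a+b"] mon_deg_sum[OF f, of a] mon_deg_sum[OF f, of b]
    by (simp add: keys_add_nat lookup_add sum.distrib)
qed

lemma mon_deg_single[simp]: "mon_deg (sg i j) = j"
  unfolding mon_deg_def by (simp)

lemma mon_deg_0[simp]: "mon_deg 0 = 0"
  unfolding mon_deg_def by simp

definition Cset :: "nat \<Rightarrow> nat set \<Rightarrow> nat \<Rightarrow> (nat \<Rightarrow>\<^sub>0 nat) set" where
  "Cset d G x = {m. ks m = G \<and> (\<forall>i. lk m i \<le> d + 1) \<and> mon_deg m = x}"

lemma NN_neg: "y < 0 \<Longrightarrow> NN d s y = 0"
  by (induction s arbitrary: y) auto

lemma Cset_empty: "Cset d {} x = (if x = 0 then {0} else {})"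
  unfolding Cset_def by auto

lemma Cset_insert:
  assumes "g \<notin> G"
  shows "Cset d (insert g G) x = (\<Union>j\<in>{j\<in>{1..d+1}. j \<le> x}. (\<lambda>m. m + sg g j) ` Cset d G (x - j))"
proof (intro equalityI subsetI)
  fix m assume m: "m \<in> Cset d (insert g G) x"
  have m1: "ks m = insert g G" "\<forall>i. lk m i \<le> d + 1" "mon_deg m = x" using m unfolding Cset_def by auto
  define j where "j = lk m g"
  have "g \<in> ks m" using m1 by simp
  then have j1: "j \<ge> 1" unfolding j_def by (simp add: in_keys_iff Suc_leI)
  have j2: "j \<le> d + 1" using m1 unfolding j_def by auto
  define m' where "m' = m - sg g j"
  have lm': "lk m' i = (if i = g then 0 else lk m i)" for i
    unfolding m'_def j_def by (simp add: lookup_minus lookup_single when_def)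
  have mm: "m = m' + sg g j"
    by (rule poly_mapping_eqI) (simp add: lookup_add lm' lookup_single when_def j_def)
  have "ks m' = ks m - {g}" by (auto simp: in_keys_iff lm' split: if_splits)
  then have km: "ks m' = G" using m1(1) assms by auto
  have dm: "mon_deg m = mon_deg m' + j" using mon_deg_add[of m' "sg g j"] mm by simp
  have "m' \<in> Cset d G (x - j)" unfolding Cset_def using km m1 dm by (simp add: lm')
  moreover have "j \<le> x" using dm m1(3) by simp
  ultimately show "m \<in> (\<Union>j\<in>{j\<in>{1..d+1}. j \<le> x}. (\<lambda>m. m + sg g j) ` Cset d G (x - j))"
    using mm j1 j2 by auto
next
  fix m assume "m \<in> (\<Union>j\<in>{j\<in>{1..d+1}. j \<le> x}. (\<lambda>m. m + sg g j) ` Cset d G (x - j))"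
  then obtain j m' where j: "1 \<le> j" "j \<le> d + 1" "j \<le> x" and m': "m' \<in> Cset d G (x - j)" and mm: "m = m' + sg g j"
    by auto
  have m'1: "ks m' = G" "\<forall>i. lk m' i \<le> d + 1" "mon_deg m' = x - j" using m' unfolding Cset_def by auto
  have g0: "lk m' g = 0" using m'1(1) assms by (metis in_keys_iff)
  have "ks m = insert g G" using mm m'1(1) j(1) by (auto simp: keys_add_nat)
  moreover have "lk m i \<le> d + 1" for i
    using mm m'1(2) j g0 by (auto simp: lookup_add lookup_single when_def)
  moreover have "mon_deg m = x" using mm m'1(3) j(3) mon_deg_add[of m' "sg g j"] by simp
  ultimately show "m \<in> Cset d (insert g G) x" unfolding Cset_def by blast
qed

lemma card_Cset: "finite G \<Longrightarrow> finite (Cset d G x) \<and> card (Cset d G x) = NN d (card G) (int x)"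
proof (induction G arbitrary: x rule: finite_induct)
  case empty then show ?case by (simp add: Cset_empty)
next
  case (insert g G)
  let ?J = "{j\<in>{1..d+1}. j \<le> x}"
  have inj: "inj_on (\<lambda>m::nat \<Rightarrow>\<^sub>0 nat. m + sg g j) A" for j A by (rule inj_onI) (metis add_right_cancel)
  have fin: "finite (Cset d (insert g G) x)"
    unfolding Cset_insert[OF insert(2)] using insert(3) by auto
  have "card (Cset d (insert g G) x) = (\<Sum>j\<in>?J. card ((\<lambda>m. m + sg g j) ` Cset d G (x - j)))"
    unfolding Cset_insert[OF insert(2)]
  proof (rule card_UN_disjoint)
    show "finite ?J" by simp
    show "\<forall>j\<in>?J. finite ((\<lambda>m. m + sg g j) ` Cset d G (x - j))" using insert(3) by auto
    show "\<forall>j\<in>?J. \<forall>j'\<in>?J. j \<noteq> j' \<longrightarrow>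
      (\<lambda>m. m + sg g j) ` Cset d G (x - j) \<inter> (\<lambda>m. m + sg g j') ` Cset d G (x - j') = {}"
    proof (intro ballI impI)
      fix j j' :: nat assume "j \<noteq> j'"
      { fix m1 m2 assume a: "m1 \<in> Cset d G (x - j)" "m2 \<in> Cset d G (x - j')" "m1 + sg g j = m2 + sg g j'"
        have "lk m1 g = 0" "lk m2 g = 0" using a insert(2) unfolding Cset_def by (auto simp: in_keys_iff)
        then have "j = j'" using arg_cong[OF a(3), of "\<lambda>p. lk p g"] by (simp add: lookup_add)
      }
      then show "(\<lambda>m. m + sg g j) ` Cset d G (x - j) \<inter> (\<lambda>m. m + sg g j') ` Cset d G (x - j') = {}"
        using \<open>j \<noteq> j'\<close> by blast
    qed
  qed
  also have "\<dots> = (\<Sum>j\<in>?J. NN d (card G) (int x - int j))"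
    apply (rule sum.cong[OF refl])
    using insert(3) by (subst card_image[OF inj]) (auto simp: of_nat_diff)
  also have "\<dots> = (\<Sum>j\<in>{1..d+1}. NN d (card G) (int x - int j))"
    by (rule sum.mono_neutral_left) (auto intro!: NN_neg)
  also have "\<dots> = NN d (card (insert g G)) (int x)" using insert(1,2) by simp
  finally show ?case using fin by simp
qed

definition StdD :: "nat set set \<Rightarrow> nat \<Rightarrow> nat \<Rightarrow> (nat \<Rightarrow>\<^sub>0 nat) set" where
  "StdD \<Delta> d x = {m. std \<Delta> d m \<and> mon_deg m = x}"

lemma StdD_UN: "StdD \<Delta> d x = (\<Union>G\<in>\<Delta>. Cset d G x)"
  unfolding StdD_def Cset_def std_def by auto

lemma card_StdD:
  assumes sc: "simplicial_complex n \<Delta>"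
  shows "finite (StdD \<Delta> d x) \<and> card (StdD \<Delta> d x) = (\<Sum>G\<in>\<Delta>. NN d (card G) (int x))"
proof -
  have fD: "finite \<Delta>" using sc unfolding simplicial_complex_def
    by (meson finite_atLeastAtMost finite_Pow_iff rev_finite_subset subsetI PowI)
  have fG: "G \<in> \<Delta> \<Longrightarrow> finite G" for G using sc_sub[OF sc] finite_subset by blast
  have "card (\<Union>G\<in>\<Delta>. Cset d G x) = (\<Sum>G\<in>\<Delta>. card (Cset d G x))"
    by (rule card_UN_disjoint) (use fD card_Cset fG in \<open>auto simp: Cset_def\<close>)
  then show ?thesis unfolding StdD_UN using fD fG card_Cset by auto
qed

definition ev :: "nat \<Rightarrow> (nat \<Rightarrow>\<^sub>0 nat)" where "ev v = sg v 1"

lemma lk_add_e: "lk (b + ev v) x = lk b x + (if x = v then 1 else 0)"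
  by (simp add: lookup_add lookup_single when_def ev_def)

lemma ks_add_e: "ks (b + ev v) = insert v (ks b)"
  by (simp add: keys_add_nat ev_def)

definition pm :: "nat \<Rightarrow> (nat \<Rightarrow>\<^sub>0 nat) \<Rightarrow> bool" where
  "pm d m \<longleftrightarrow> card (ks m) = d + 1 \<and> lk m ` ks m = {1..d+1}"

definition invs :: "(nat \<Rightarrow>\<^sub>0 nat) \<Rightarrow> (nat \<times> nat) set" where
  "invs m = {(u,w). u \<in> ks m \<and> w \<in> ks m \<and> u < w \<and> lk m w < lk m u}"

definition psi :: "(nat set \<Rightarrow> 'k::field) \<Rightarrow> nat \<Rightarrow> (nat \<Rightarrow>\<^sub>0 nat) \<Rightarrow> 'k" where
  "psi z d m = (if pm d m then z (ks m) * (-1) ^ card (invs m) else 0)"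

lemma finite_invs: "finite (invs m)"
proof -
  have "invs m \<subseteq> ks m \<times> ks m" unfolding invs_def by auto
  then show ?thesis by (rule finite_subset) simp
qed

lemma pm_inj: "pm d m \<Longrightarrow> inj_on (lk m) (ks m)"
  unfolding pm_def by (simp add: inj_on_iff_eq_card)

lemma caseB1:
  assumes "card (ks b) = d" "v \<notin> ks b" "pm d (b + ev v)"
  shows "lk b ` ks b = {2..d+1}"
proof -
  let ?m = "b + ev v"
  have bv: "lk b v = 0" using assms(2) by (simp add: in_keys_iff)
  have inj: "inj_on (lk ?m) (insert v (ks b))" using pm_inj[OF assms(3)] ks_add_e[of b v] by metis
  have img: "lk ?m ` insert v (ks b) = {1..d+1}" using assms(3) unfolding pm_def by (simp add: ks_add_e)
  have eqb: "lk ?m u = lk b u" if "u \<in> ks b" for u using that assms(2) by (auto simp: lk_add_e)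
  have mv: "lk ?m v = 1" using bv by (simp add: lk_add_e)
  have "lk ?m ` ks b = lk b ` ks b" using eqb by (auto intro: image_cong)
  moreover have "1 \<notin> lk ?m ` ks b"
  proof
    assume "1 \<in> lk ?m ` ks b"
    then obtain u where "u \<in> ks b" "lk ?m u = lk ?m v" using mv by auto
    moreover have "u \<in> insert v (ks b)" "v \<in> insert v (ks b)" using \<open>u \<in> ks b\<close> by auto
    ultimately have "u = v" using inj unfolding inj_on_def by blast
    then show False using assms(2) \<open>u \<in> ks b\<close> by simp
  qed
  moreover have "insert 1 (lk ?m ` ks b) = {1..d+1}" using img mv by simp
  ultimately have A: "insert 1 (lk b ` ks b) = {1..d+1}" "1 \<notin> lk b ` ks b" by auto
  have "lk b ` ks b = insert 1 (lk b ` ks b) - {1}" using A(2) by auto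
  also have "\<dots> = {1..d+1} - {1}" using A(1) by simp
  also have "\<dots> = {2..d+1}" by auto
  finally show ?thesis .
qed

lemma caseB2:
  assumes "lk b ` ks b = {2..d+1}" "card (ks b) = d" "v \<notin> ks b"
  shows "pm d (b + ev v)"
    and "card (invs (b + ev v)) = card (invs b) + card {u\<in>ks b. u < v}"
proof -
  let ?m = "b + ev v"
  have bv: "lk b v = 0" using assms(3) by (simp add: in_keys_iff)
  have eqb: "lk ?m u = lk b u" if "u \<in> ks b" for u using that assms(3) by (auto simp: lk_add_e)
  have mv: "lk ?m v = 1" using bv by (simp add: lk_add_e)
  have fin: "finite (ks b)" by simp
  have "lk ?m ` ks ?m = insert 1 (lk b ` ks b)"
    using eqb mv by (auto simp: ks_add_e)
  also have "\<dots> = {1..d+1}" using assms(1) by auto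
  finally show "pm d ?m" unfolding pm_def using assms(2,3) fin by (simp add: ks_add_e)
  have ge2: "lk b u \<ge> 2" if "u \<in> ks b" for u using assms(1) that by auto
  have "invs ?m = invs b \<union> (\<lambda>u. (u, v)) ` {u\<in>ks b. u < v}"
  proof (intro equalityI subsetI)
    fix p assume p: "p \<in> invs ?m"
    then obtain u w where uw: "p = (u,w)" "u \<in> insert v (ks b)" "w \<in> insert v (ks b)" "u < w" "lk ?m w < lk ?m u"
      unfolding invs_def by (auto simp: ks_add_e)
    show "p \<in> invs b \<union> (\<lambda>u. (u, v)) ` {u\<in>ks b. u < v}"
    proof (cases "u = v")
      case True
      then show ?thesis using uw mv by (auto simp: lk_add_e)
    next
      case False
      then show ?thesis using uw eqb unfolding invs_def by (cases "w = v") auto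
    qed
  next
    fix p assume "p \<in> invs b \<union> (\<lambda>u. (u, v)) ` {u\<in>ks b. u < v}"
    then show "p \<in> invs ?m"
    proof
      assume "p \<in> invs b" then show ?thesis using eqb unfolding invs_def by (auto simp: ks_add_e)
    next
      assume "p \<in> (\<lambda>u. (u, v)) ` {u\<in>ks b. u < v}"
      then obtain u where "p = (u, v)" "u \<in> ks b" "u < v" by auto
      then show ?thesis using eqb[of u] mv ge2[of u] unfolding invs_def by (auto simp: ks_add_e)
    qed
  qed
  moreover have "invs b \<inter> (\<lambda>u. (u, v)) ` {u\<in>ks b. u < v} = {}"
    using assms(3) unfolding invs_def by auto
  moreover have "card ((\<lambda>u. (u, v)) ` {u\<in>ks b. u < v}) = card {u\<in>ks b. u < v}"
    by (rule card_image) (auto intro: inj_onI)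
  ultimately show "card (invs ?m) = card (invs b) + card {u\<in>ks b. u < v}"
    using finite_invs by (simp add: card_Un_disjoint)
qed

lemma caseA:
  assumes cb: "card (ks b) = d + 1" and v0: "v0 \<in> ks b" and pm1: "pm d (b + ev v0)"
  shows "\<exists>u0. u0 \<in> ks b \<and> u0 \<noteq> v0 \<and> (\<forall>v\<in>ks b. v \<noteq> u0 \<and> v \<noteq> v0 \<longrightarrow> \<not> pm d (b + ev v))
     \<and> psi z d (b + ev v0) + psi z d (b + ev u0) = 0"
proof -
  let ?G = "ks b"
  define m1 where "m1 = b + ev v0"
  have k1: "ks m1 = ?G" unfolding m1_def using v0 by (simp add: ks_add_e insert_absorb)
  have inj1: "inj_on (lk m1) ?G" using pm_inj[OF pm1] k1 unfolding m1_def by simp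
  have img1: "lk m1 ` ?G = {1..d+1}" using pm1 k1 unfolding m1_def pm_def by simp
  define k where "k = lk m1 v0"
  have bv0: "lk b v0 \<ge> 1" using v0 by (simp add: in_keys_iff Suc_leI)
  have kdef: "k = lk b v0 + 1" unfolding k_def m1_def by (simp add: lk_add_e)
  have k2: "k \<ge> 2" using bv0 kdef by simp
  have kle: "k \<le> d + 1" using img1 v0 unfolding k_def by auto
  have "k - 1 \<in> lk m1 ` ?G" using img1 k2 kle by auto
  then obtain u0 where u0: "u0 \<in> ?G" "lk m1 u0 = k - 1" by auto
  have uv: "u0 \<noteq> v0" using u0(2) k2 unfolding k_def by auto
  have bu0: "lk b u0 = k - 1" using u0(2) uv unfolding m1_def by (simp add: lk_add_e)
  define m2 where "m2 = b + ev u0"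
  have k2s: "ks m2 = ?G" unfolding m2_def using u0(1) by (simp add: ks_add_e insert_absorb)
  have m2u: "lk m2 u0 = k" unfolding m2_def using bu0 k2 by (simp add: lk_add_e)
  have m2v: "lk m2 v0 = k - 1" unfolding m2_def using uv kdef by (simp add: lk_add_e)
  have m1v: "lk m1 v0 = k" unfolding k_def ..
  have oth: "lk m1 w = lk m2 w \<and> lk m1 w \<noteq> k - 1 \<and> lk m1 w \<noteq> k" if "w \<in> ?G" "w \<noteq> u0" "w \<noteq> v0" for w
  proof -
    have "lk m1 w = lk b w" "lk m2 w = lk b w" using that unfolding m1_def m2_def by (auto simp: lk_add_e)
    moreover have "lk m1 w \<noteq> lk m1 u0" "lk m1 w \<noteq> lk m1 v0" using inj1 that u0(1) v0 unfolding inj_on_def by metis+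
    ultimately show ?thesis using u0(2) m1v by simp
  qed
  have notpm: "\<not> pm d (b + ev v)" if "v \<in> ?G" "v \<noteq> u0" "v \<noteq> v0" for v
  proof
    assume "pm d (b + ev v)"
    then have "inj_on (lk (b + ev v)) (ks (b + ev v))" by (rule pm_inj)
    moreover have "ks (b + ev v) = ?G" using that by (simp add: ks_add_e insert_absorb)
    moreover have "lk (b + ev v) u0 = lk (b + ev v) v0" using that bu0 kdef uv by (simp add: lk_add_e)
    ultimately show False using u0(1) v0 uv unfolding inj_on_def by metis
  qed
  have img2: "lk m2 ` ?G = lk m1 ` ?G"
  proof (intro equalityI subsetI)
    fix c assume "c \<in> lk m2 ` ?G"
    then obtain w where w: "w \<in> ?G" "c = lk m2 w" by auto
    show "c \<in> lk m1 ` ?G"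
    proof (cases "w = u0 \<or> w = v0")
      case True
      then show ?thesis using w m2u m2v m1v u0 v0 by (metis image_eqI)
    next
      case False
      then show ?thesis using w oth by (metis image_eqI)
    qed
  next
    fix c assume "c \<in> lk m1 ` ?G"
    then obtain w where w: "w \<in> ?G" "c = lk m1 w" by auto
    show "c \<in> lk m2 ` ?G"
    proof (cases "w = u0 \<or> w = v0")
      case True
      then show ?thesis using w m2u m2v m1v u0 v0 by (metis image_eqI)
    next
      case False
      then show ?thesis using w oth by (metis image_eqI)
    qed
  qed
  have pm2: "pm d m2" unfolding pm_def using k2s img2 img1 cb by simp
  define p0 where "p0 = (min u0 v0, max u0 v0)"
  have key: "(lk m1 y < lk m1 x) \<longleftrightarrow> (lk m2 y < lk m2 x)"
    if "x \<in> ?G" "y \<in> ?G" "x < y" "(x, y) \<noteq> p0" for x y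
  proof -
    have xy: "\<not> (x \<in> {u0, v0} \<and> y \<in> {u0, v0})" using that unfolding p0_def by (auto simp: min_def max_def)
    show ?thesis
    proof (cases "x \<in> {u0, v0}")
      case True
      then have yo: "y \<noteq> u0" "y \<noteq> v0" using xy by auto
      show ?thesis using True oth[OF that(2) yo] m2u m2v m1v u0(2) k2 by auto
    next
      case False
      then have xo: "x \<noteq> u0" "x \<noteq> v0" by auto
      show ?thesis
      proof (cases "y \<in> {u0, v0}")
        case True
        show ?thesis using True oth[OF that(1) xo] m2u m2v m1v u0(2) k2 by auto
      next
        case False
        then show ?thesis using oth[OF that(1) xo] oth[OF that(2)] by auto
      qed
    qed
  qed
  have eqI: "invs m1 - {p0} = invs m2 - {p0}"
    unfolding invs_def k1 k2s using key by auto
  have p0G: "fst p0 \<in> ?G" "snd p0 \<in> ?G" "fst p0 < snd p0" using u0(1) v0 uv unfolding p0_def by (auto simp: min_def max_def)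
  have p0x: "p0 \<in> invs m1 \<longleftrightarrow> p0 \<notin> invs m2"
  proof (cases "u0 < v0")
    case True
    then show ?thesis unfolding invs_def p0_def k1 k2s using u0 v0 m1v m2u m2v k2 by auto
  next
    case False
    then have "v0 < u0" using uv by simp
    then show ?thesis unfolding invs_def p0_def k1 k2s using u0 v0 m1v m2u m2v k2 by auto
  qed
  have c1: "card (invs m1) = card (invs m1 - {p0}) + (if p0 \<in> invs m1 then 1 else 0)"
  proof (cases "p0 \<in> invs m1")
    case True
    then have "card (invs m1 - {p0}) = card (invs m1) - 1" by (simp add: card_Diff_singleton)
    moreover have "card (invs m1) > 0" using True finite_invs[of m1] card_gt_0_iff by blast
    ultimately show ?thesis using True by simp
  next
    case False
    then show ?thesis by simp
  qed
  have c2: "card (invs m2) = card (invs m2 - {p0}) + (if p0 \<in> invs m2 then 1 else 0)"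
  proof (cases "p0 \<in> invs m2")
    case True
    then have "card (invs m2 - {p0}) = card (invs m2) - 1" by (simp add: card_Diff_singleton)
    moreover have "card (invs m2) > 0" using True finite_invs[of m2] card_gt_0_iff by blast
    ultimately show ?thesis using True by simp
  next
    case False
    then show ?thesis by simp
  qed
  have sgn: "((-1::'a::field) ^ card (invs m1)) = - ((-1) ^ card (invs m2))"
  proof -
    define C where "C = card (invs m2 - {p0})"
    have c1': "card (invs m1) = C + (if p0 \<in> invs m1 then 1 else 0)" using c1 eqI unfolding C_def by metis
    have c2': "card (invs m2) = C + (if p0 \<in> invs m1 then 0 else 1)" using c2 p0x unfolding C_def by simp
    show ?thesis
    proof (cases "p0 \<in> invs m1")
      case True
      then show ?thesis unfolding c1' c2' by simp
    next
      case False
      then show ?thesis unfolding c1' c2' by simp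
    qed
  qed
  have "psi z d m1 + psi z d m2 = 0"
    unfolding psi_def using pm1 pm2 k1 k2s sgn unfolding m1_def by simp
  then show ?thesis using u0(1) uv notpm unfolding m1_def m2_def by blast
qed

lemma chain_face: "is_chain \<Delta> d z \<Longrightarrow> z F \<noteq> 0 \<Longrightarrow> F \<in> \<Delta> \<and> card F = d + 1"
  unfolding is_chain_def by blast

lemma sc_Union: assumes "simplicial_complex n \<Delta>" shows "\<Union>\<Delta> = {1..n}"
proof
  show "\<Union>\<Delta> \<subseteq> {1..n}" using sc_sub[OF assms] by blast
  show "{1..n} \<subseteq> \<Union>\<Delta>"
  proof
    fix i assume "i \<in> {1..n}"
    then have "{i} \<in> \<Delta>" using assms unfolding simplicial_complex_def by blast
    then show "i \<in> \<Union>\<Delta>" by blast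
  qed
qed

lemma psi_zero_notpm: "\<not> pm d m \<Longrightarrow> psi z d m = 0"
  unfolding psi_def by simp

lemma psi_sum:
  fixes z :: "nat set \<Rightarrow> 'k::field"
  assumes sc: "simplicial_complex n \<Delta>" and ch: "is_chain \<Delta> d z"
    and bd: "boundary \<Delta> d z = (\<lambda>_. 0)"
  shows "(\<Sum>v\<in>{1..n}. psi z d (b + ev v)) = 0"
proof -
  let ?G = "ks b"
  let ?f = "\<lambda>v. psi z d (b + ev v)"
  have fG: "finite ?G" by simp
  have cardks: "card (ks (b + ev v)) = (if v \<in> ?G then card ?G else card ?G + 1)" for v
    by (simp add: ks_add_e insert_absorb)
  consider "card ?G = d + 1" | "card ?G = d" | "card ?G \<noteq> d \<and> card ?G \<noteq> d + 1" by blast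
  then show ?thesis
  proof cases
    case 3
    have "?f v = 0" for v
      by (rule psi_zero_notpm) (use 3 cardks[of v] in \<open>auto simp: pm_def split: if_splits\<close>)
    then show ?thesis by simp
  next
    case 1
    have out0: "?f v = 0" if "v \<notin> ?G" for v
      by (rule psi_zero_notpm) (use 1 cardks[of v] that in \<open>auto simp: pm_def\<close>)
    show ?thesis
    proof (cases "\<exists>v0\<in>?G. pm d (b + ev v0)")
      case False
      then have "?f v = 0" for v using out0 psi_zero_notpm by metis
      then show ?thesis by simp
    next
      case True
      then obtain v0 where v0: "v0 \<in> ?G" "pm d (b + ev v0)" by blast
      obtain u0 where u0: "u0 \<in> ?G" "u0 \<noteq> v0" "\<forall>v\<in>?G. v \<noteq> u0 \<and> v \<noteq> v0 \<longrightarrow> \<not> pm d (b + ev v)"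
        "?f v0 + ?f u0 = 0"
        using caseA[OF 1 v0, of z] by blast
      show ?thesis
      proof (cases "z ?G = 0")
        case True
        have "?f v = 0" for v
        proof (cases "v \<in> ?G")
          case True
          then have "ks (b + ev v) = ?G" by (simp add: ks_add_e insert_absorb)
          then show ?thesis using \<open>z ?G = 0\<close> unfolding psi_def by simp
        next
          case False then show ?thesis using out0 by simp
        qed
        then show ?thesis by simp
      next
        case False
        then have "?G \<in> \<Delta>" using chain_face[OF ch] by blast
        then have Gsub: "?G \<subseteq> {1..n}" using sc_sub[OF sc] by blast
        have "(\<Sum>v\<in>{1..n}. ?f v) = (\<Sum>v\<in>?G. ?f v)"
          by (rule sum.mono_neutral_right) (use Gsub out0 in auto)
        also have "\<dots> = ?f v0 + (\<Sum>v\<in>?G - {v0}. ?f v)"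
          using v0(1) fG by (simp add: sum.remove)
        also have "(\<Sum>v\<in>?G - {v0}. ?f v) = ?f u0 + (\<Sum>v\<in>?G - {v0} - {u0}. ?f v)"
          using u0(1,2) fG by (simp add: sum.remove)
        also have "(\<Sum>v\<in>?G - {v0} - {u0}. ?f v) = 0"
          by (rule sum.neutral) (use u0(3) psi_zero_notpm in blast)
        finally show ?thesis using u0(4) by (simp add: add.assoc)
      qed
    qed
  next
    case 2
    have in0: "?f v = 0" if "v \<in> ?G" for v
      by (rule psi_zero_notpm) (use 2 cardks[of v] that in \<open>auto simp: pm_def\<close>)
    have "(\<Sum>v\<in>{1..n}. ?f v) = (\<Sum>v\<in>{1..n} - ?G. ?f v)"
      by (rule sum.mono_neutral_right) (use in0 in auto)
    also have "\<dots> = 0"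
    proof (cases "\<exists>v\<in>{1..n} - ?G. pm d (b + ev v)")
      case False
      then show ?thesis using psi_zero_notpm by (metis (no_types, lifting) sum.neutral)
    next
      case True
      then obtain v1 where v1: "v1 \<notin> ?G" "pm d (b + ev v1)" by blast
      have img: "lk b ` ?G = {2..d+1}" by (rule caseB1[OF 2 v1])
      have fv: "?f v = (-1) ^ card (invs b) * ((-1) ^ card {u\<in>?G. u < v} * z (insert v ?G))"
        if "v \<notin> ?G" for v
        using caseB2[OF img 2 that] unfolding psi_def by (simp add: ks_add_e power_add algebra_simps)
      have S: "(\<Sum>v\<in>{1..n} - ?G. (-1) ^ card {u\<in>?G. u < v} * z (insert v ?G)) = 0"
      proof (cases "?G \<in> \<Delta>")
        case True
        have "0 = boundary \<Delta> d z ?G" using bd by simp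
        also have "\<dots> = (\<Sum>v\<in>\<Union>\<Delta> - ?G. if insert v ?G \<in> \<Delta>
          then (-1) ^ card {u\<in>?G. u < v} * z (insert v ?G) else 0)"
          unfolding boundary_def using True 2 by simp
        also have "\<dots> = (\<Sum>v\<in>{1..n} - ?G. (-1) ^ card {u\<in>?G. u < v} * z (insert v ?G))"
          unfolding sc_Union[OF sc]
          by (rule sum.cong[OF refl]) (use chain_face[OF ch] in auto)
        finally show ?thesis by simp
      next
        case False
        have "z (insert v ?G) = 0" for v
        proof (rule ccontr)
          assume "z (insert v ?G) \<noteq> 0"
          then have "insert v ?G \<in> \<Delta>" using chain_face[OF ch] by blast
          then have "?G \<in> \<Delta>" using sc_down[OF sc] by blast
          then show False using False by simp
        qed
        then show ?thesis by simp
      qed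
      have "(\<Sum>v\<in>{1..n} - ?G. ?f v) = (\<Sum>v\<in>{1..n} - ?G. (-1) ^ card (invs b) * ((-1) ^ card {u\<in>?G. u < v} * z (insert v ?G)))"
        by (rule sum.cong[OF refl]) (use fv in auto)
      also have "\<dots> = (-1) ^ card (invs b) * (\<Sum>v\<in>{1..n} - ?G. (-1) ^ card {u\<in>?G. u < v} * z (insert v ?G))"
        by (simp add: sum_distrib_left)
      finally show ?thesis using S by simp
    qed
    finally show ?thesis .
  qed
qed

lemma ev_inj: "ev v = ev w \<Longrightarrow> v = w"
  unfolding ev_def by (metis lookup_single_eq lookup_single_not_eq zero_neq_one)

lemma lk_ev: "lk (ev v) i = (if i = v then 1 else 0)"
  unfolding ev_def by (simp add: lookup_single when_def)

lemma ks_ev[simp]: "ks (ev v) = {v}"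
  unfolding ev_def by simp

lemma mon_deg_ev[simp]: "mon_deg (ev v) = 1"
  unfolding ev_def by simp

lemma deg1_key:
  assumes "mon_deg k = 1" shows "\<exists>v. k = ev v"
proof -
  have s: "(\<Sum>i\<in>ks k. lk k i) = 1" using assms unfolding mon_deg_def .
  have "ks k \<noteq> {}" using s by auto
  then obtain v where v: "v \<in> ks k" by blast
  have f: "finite (ks k)" by simp
  have s2: "lk k v + (\<Sum>i\<in>ks k - {v}. lk k i) = 1" using s sum.remove[OF f v, of "lk k"] by simp
  have lv: "lk k v \<ge> 1" using v by (simp add: in_keys_iff Suc_leI)
  have lv1: "lk k v = 1" using s2 lv by linarith
  have r0: "(\<Sum>i\<in>ks k - {v}. lk k i) = 0" using s2 lv1 by linarith
  have "i \<notin> ks k" if "i \<noteq> v" for i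
  proof
    assume "i \<in> ks k"
    then have "lk k i = 0" using r0 that f by (simp add: sum_eq_0_iff)
    then show False using \<open>i \<in> ks k\<close> by (simp add: in_keys_iff)
  qed
  then have "lk k i = (if i = v then 1 else 0)" for i using lv1 by (auto simp: in_keys_iff)
  then have "k = ev v" by (intro poly_mapping_eqI) (simp add: lk_ev)
  then show ?thesis by blast
qed

lemma lin_expand:
  assumes "(l :: 'k::comm_ring_1 mpoly) \<in> R_deg n 1"
  shows "l = (\<Sum>v\<in>{1..n}. sg (ev v) (lk l (ev v)))"
proof (rule poly_mapping_eqI)
  fix k
  have "lk (\<Sum>v\<in>{1..n}. sg (ev v) (lk l (ev v))) k = (\<Sum>v\<in>{1..n}. (lk l (ev v) when ev v = k))"
    by (simp add: lookup_sum lookup_single)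
  also have "\<dots> = (\<Sum>v\<in>{1..n}. (lk l k when ev v = k))"
    by (rule sum.cong) (auto simp: when_def)
  also have "\<dots> = lk l k"
  proof (cases "\<exists>w\<in>{1..n}. ev w = k")
    case True
    then obtain w where w: "w \<in> {1..n}" "ev w = k" by blast
    have "(\<Sum>v\<in>{1..n}. (lk l k when ev v = k)) = (\<Sum>v\<in>{1..n}. (if v = w then lk l k else 0))"
      by (rule sum.cong) (use w ev_inj in \<open>auto simp: when_def\<close>)
    then show ?thesis using w by simp
  next
    case False
    have "k \<notin> ks l"
    proof
      assume "k \<in> ks l"
      then have "ks k \<subseteq> {1..n}" "mon_deg k = 1" using assms unfolding R_deg_def in_R_def by auto
      moreover obtain v where "k = ev v" using deg1_key \<open>mon_deg k = 1\<close> by blast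
      ultimately show False using False by auto
    qed
    then show ?thesis using False by (simp add: in_keys_iff when_def)
  qed
  finally show "lk l k = lk (\<Sum>v\<in>{1..n}. sg (ev v) (lk l (ev v))) k" by simp
qed

lemma mult_lin:
  assumes "l = (\<Sum>v\<in>V. sg (ev v) (av v))" "p = (\<Sum>a\<in>A. sg a (c a))"
  shows "(l :: 'k::comm_ring_1 mpoly) * p = (\<Sum>v\<in>V. \<Sum>a\<in>A. sg (ev v + a) (av v * c a))"
  unfolding assms sum_product by (simp add: mult_single)

definition PhiF :: "(nat \<Rightarrow>\<^sub>0 nat) set \<Rightarrow> ((nat \<Rightarrow>\<^sub>0 nat) \<Rightarrow> 'k::field) \<Rightarrow> 'k mpoly \<Rightarrow> 'k" where
  "PhiF W \<phi> p = (\<Sum>w\<in>W. \<phi> w * lk p w)"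

lemma PhiF_add: "PhiF W \<phi> (p + q) = PhiF W \<phi> p + PhiF W \<phi> q"
  unfolding PhiF_def by (simp add: lookup_add distrib_left sum.distrib)

lemma PhiF_diff: "PhiF W \<phi> (p - q) = PhiF W \<phi> p - PhiF W \<phi> q"
  unfolding PhiF_def by (simp add: lookup_minus right_diff_distrib sum_subtractf)

lemma PhiF_sum: "PhiF W \<phi> (sum f A) = (\<Sum>x\<in>A. PhiF W \<phi> (f x))"
  unfolding PhiF_def by (simp add: lookup_sum sum_distrib_left sum.swap[of _ W])

lemma PhiF_single:
  assumes "finite W" "\<forall>w. \<phi> w \<noteq> 0 \<longrightarrow> w \<in> W"
  shows "PhiF W \<phi> (sg u c) = \<phi> u * c"
proof -
  have "PhiF W \<phi> (sg u c) = (\<Sum>w\<in>W. if w = u then \<phi> u * c else 0)"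
    unfolding PhiF_def by (rule sum.cong) (auto simp: lookup_single when_def)
  also have "\<dots> = \<phi> u * c" using assms by (auto simp: sum.delta')
  finally show ?thesis .
qed

lemma PhiF_lp:
  assumes fW: "finite W" and sup: "\<forall>w. \<phi> w \<noteq> 0 \<longrightarrow> w \<in> W"
    and kill: "\<forall>b. (\<Sum>v\<in>V. av v * \<phi> (b + ev v)) = 0"
    and l: "l = (\<Sum>v\<in>V. sg (ev v) (av v))" and p: "p = (\<Sum>a\<in>A. sg a (c a))"
  shows "PhiF W \<phi> ((l :: 'k::field mpoly) * p) = 0"
proof -
  have "PhiF W \<phi> (l * p) = (\<Sum>v\<in>V. \<Sum>a\<in>A. \<phi> (ev v + a) * (av v * c a))"
    unfolding mult_lin[OF l p] PhiF_sum PhiF_single[OF fW sup] ..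
  also have "\<dots> = (\<Sum>a\<in>A. c a * (\<Sum>v\<in>V. av v * \<phi> (a + ev v)))"
    by (subst sum.swap) (simp add: sum_distrib_left algebra_simps add.commute)
  also have "\<dots> = 0" using kill by simp
  finally show ?thesis .
qed

definition zdeg :: "nat set \<Rightarrow> (nat \<Rightarrow>\<^sub>0 nat) \<Rightarrow> nat" where
  "zdeg Z m = (\<Sum>v\<in>Z. lk m v)"

definition phiw :: "(nat set \<Rightarrow> 'k::field) \<Rightarrow> nat \<Rightarrow> (nat \<Rightarrow> 'k) \<Rightarrow> nat set \<Rightarrow> nat set \<Rightarrow> nat
    \<Rightarrow> (nat \<Rightarrow>\<^sub>0 nat) \<Rightarrow> 'k" where
  "phiw z d av S Z K0 m = psi z d m * (if zdeg Z m = K0 then (\<Prod>v\<in>S. av v ^ (d + 1 - lk m v)) else 0)"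

lemma zdeg_add_ev: "finite Z \<Longrightarrow> zdeg Z (b + ev v) = zdeg Z b + (if v \<in> Z then 1 else 0)"
  unfolding zdeg_def by (simp add: lk_add_e sum.distrib)

lemma pm_val: "pm d m \<Longrightarrow> v \<in> ks m \<Longrightarrow> lk m v \<le> d + 1"
  unfolding pm_def by auto

lemma phiw_kill:
  fixes z :: "nat set \<Rightarrow> 'k::field"
  assumes sc: "simplicial_complex n \<Delta>" and ch: "is_chain \<Delta> d z"
    and bd: "boundary \<Delta> d z = (\<lambda>_. 0)"
    and S: "S = {v\<in>{1..n}. av v \<noteq> 0}" and Z: "Z = {v\<in>{1..n}. av v = 0}"
    and bound: "\<forall>m. psi z d m \<noteq> 0 \<longrightarrow> zdeg Z m \<le> K0"
  shows "(\<Sum>v\<in>{1..n}. av v * phiw z d av S Z K0 (b + ev v)) = 0"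
proof -
  let ?phi = "phiw z d av S Z K0"
  have fS: "finite S" and fZ: "finite Z" using S Z by auto
  have SV: "S \<subseteq> {1..n}" using S by auto
  have "(\<Sum>v\<in>{1..n}. av v * ?phi (b + ev v)) = (\<Sum>v\<in>S. av v * ?phi (b + ev v))"
    by (rule sum.mono_neutral_right) (use S in auto)
  also have "\<dots> = 0"
  proof (cases "zdeg Z b = K0")
    case False
    have "v \<in> S \<Longrightarrow> zdeg Z (b + ev v) = zdeg Z b" for v using zdeg_add_ev[OF fZ] S Z by auto
    then show ?thesis using False unfolding phiw_def by simp
  next
    case True
    define W where "W = (\<Prod>u\<in>S. av u ^ (d + 1 - lk b u))"
    have each: "av v * ?phi (b + ev v) = psi z d (b + ev v) * W" if v: "v \<in> S" for v
    proof (cases "psi z d (b + ev v) = 0")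
      case True then show ?thesis unfolding phiw_def by simp
    next
      case False
      then have pmv: "pm d (b + ev v)" unfolding psi_def by (auto split: if_splits)
      have "lk (b + ev v) v \<le> d + 1" by (rule pm_val[OF pmv]) (simp add: ks_add_e)
      then have lbv: "lk b v \<le> d" by (simp add: lk_add_e)
      have zd: "zdeg Z (b + ev v) = K0" using zdeg_add_ev[OF fZ] True v S Z by auto
      have "(\<Prod>u\<in>S. av u ^ (d + 1 - lk (b + ev v) u))
          = av v ^ (d + 1 - lk (b + ev v) v) * (\<Prod>u\<in>S - {v}. av u ^ (d + 1 - lk (b + ev v) u))"
        using prod.remove[OF fS v] by simp
      also have "(\<Prod>u\<in>S - {v}. av u ^ (d + 1 - lk (b + ev v) u)) = (\<Prod>u\<in>S - {v}. av u ^ (d + 1 - lk b u))"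
        by (rule prod.cong) (auto simp: lk_add_e)
      finally have P: "(\<Prod>u\<in>S. av u ^ (d + 1 - lk (b + ev v) u))
          = av v ^ (d - lk b v) * (\<Prod>u\<in>S - {v}. av u ^ (d + 1 - lk b u))" by (simp add: lk_add_e)
      have W2: "W = av v ^ (d + 1 - lk b v) * (\<Prod>u\<in>S - {v}. av u ^ (d + 1 - lk b u))"
        unfolding W_def using prod.remove[OF fS v] by simp
      have "d + 1 - lk b v = Suc (d - lk b v)" using lbv by simp
      then have "av v * av v ^ (d - lk b v) = av v ^ (d + 1 - lk b v)" by simp
      then show ?thesis unfolding phiw_def using zd P W2 by (simp add: algebra_simps)
    qed
    have "(\<Sum>v\<in>S. av v * ?phi (b + ev v)) = W * (\<Sum>v\<in>S. psi z d (b + ev v))"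
      using each by (simp add: sum_distrib_left algebra_simps)
    also have "(\<Sum>v\<in>S. psi z d (b + ev v)) = (\<Sum>v\<in>{1..n}. psi z d (b + ev v))"
    proof (rule sum.mono_neutral_left)
      show "finite {1..n}" by simp
      show "S \<subseteq> {1..n}" by (rule SV)
      show "\<forall>i\<in>{1..n} - S. psi z d (b + ev i) = 0"
      proof
        fix v assume v: "v \<in> {1..n} - S"
        then have "v \<in> Z" using S Z by auto
        then have "zdeg Z (b + ev v) = K0 + 1" using zdeg_add_ev[OF fZ] True by simp
        then show "psi z d (b + ev v) = 0" using bound by fastforce
      qed
    qed
    also have "\<dots> = 0" by (rule psi_sum[OF sc ch bd])
    finally show ?thesis by simp
  qed
  finally show ?thesis .
qed

lemma gauss2: "2 * (\<Sum>i\<in>{1..k::nat}. i) = k * (k + 1)"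
  by (induction k) (auto simp: algebra_simps)

lemma psi_support:
  assumes ch: "is_chain \<Delta> d z" and sc: "simplicial_complex n \<Delta>" and nz: "psi z d m \<noteq> 0"
  shows "std \<Delta> d m" "2 * mon_deg m = (d + 1) * (d + 2)" "ks m \<subseteq> {1..n}" "pm d m"
proof -
  show pmm: "pm d m" using nz unfolding psi_def by (auto split: if_splits)
  have "z (ks m) \<noteq> 0" using nz unfolding psi_def by (auto split: if_splits)
  then have D: "ks m \<in> \<Delta>" using chain_face[OF ch] by blast
  then show "ks m \<subseteq> {1..n}" using sc_sub[OF sc] by blast
  have "lk m i \<le> d + 1" for i
  proof (cases "i \<in> ks m")
    case True then show ?thesis using pm_val[OF pmm] by blast
  next
    case False then show ?thesis by (simp add: in_keys_iff)
  qed
  then show "std \<Delta> d m" using D unfolding std_def by blast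
  have "mon_deg m = (\<Sum>i\<in>ks m. lk m i)" unfolding mon_deg_def ..
  also have "\<dots> = (\<Sum>c\<in>lk m ` ks m. c)" using pm_inj[OF pmm] by (simp add: sum.reindex)
  also have "\<dots> = (\<Sum>c\<in>{1..d+1}. c)" using pmm unfolding pm_def by simp
  finally show "2 * mon_deg m = (d + 1) * (d + 2)" using gauss2[of "d+1"] by simp
qed

definition Mf :: "nat set \<Rightarrow> (nat \<Rightarrow> 'k::comm_ring_1) \<Rightarrow> (nat \<Rightarrow>\<^sub>0 nat) \<Rightarrow> (nat \<Rightarrow>\<^sub>0 nat) \<Rightarrow> 'k" where
  "Mf V av w a = (\<Sum>v\<in>V. (av v when ev v + a = w))"

lemma lk_lmult:
  assumes "l = (\<Sum>v\<in>V. sg (ev v) (av v))"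
  shows "lk ((l :: 'k::comm_ring_1 mpoly) * (\<Sum>a\<in>A. sg a (c a))) w = (\<Sum>a\<in>A. c a * Mf V av w a)"
proof -
  have "lk (l * (\<Sum>a\<in>A. sg a (c a))) w = (\<Sum>v\<in>V. \<Sum>a\<in>A. (av v * c a when ev v + a = w))"
    unfolding mult_lin[OF assms refl] by (simp add: lookup_sum lookup_single)
  also have "\<dots> = (\<Sum>a\<in>A. c a * Mf V av w a)"
    unfolding Mf_def sum_distrib_left
    by (subst sum.swap) (rule sum.cong[OF refl], rule sum.cong[OF refl], simp add: when_def mult.commute)
  finally show ?thesis .
qed

lemma PhiF_J:
  assumes sc: "simplicial_complex n \<Delta>" and W: "\<forall>w\<in>W. std \<Delta> d w"
    and p: "(p :: 'k::field mpoly) \<in> ideal_gen n (Gens n \<Delta> d)"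
  shows "PhiF W \<phi> p = 0"
proof -
  have "lk p w = 0" if "w \<in> W" for w
    using J_keys_nonstd[OF sc p, of w] W that by (auto simp: in_keys_iff)
  then show ?thesis unfolding PhiF_def by simp
qed

lemma std_sub: "simplicial_complex n \<Delta> \<Longrightarrow> std \<Delta> d m \<Longrightarrow> ks m \<subseteq> {1..n}"
  unfolding std_def using sc_sub by blast

lemma quot_bound:
  assumes sc: "simplicial_complex n \<Delta>"
    and q: "quot_nonzero_deg n (ideal_gen n (Gens n \<Delta> d) :: 'k::comm_ring_1 mpoly set) i"
  shows "i \<le> n * (d + 1)"
proof -
  obtain f :: "'k mpoly" where f: "f \<in> R_deg n i" "f \<notin> ideal_gen n (Gens n \<Delta> d)"
    using q unfolding quot_nonzero_deg_def by blast
  have "\<exists>w\<in>ks f. std \<Delta> d w"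
  proof (rule ccontr)
    assume "\<not> ?thesis"
    then have "f \<in> ideal_gen n (Gens n \<Delta> d)"
      using nonstd_in_J[OF sc] f(1) unfolding R_deg_def by blast
    then show False using f(2) by simp
  qed
  then obtain w where w: "w \<in> ks f" "std \<Delta> d w" by blast
  have dw: "mon_deg w = i" using w(1) f(1) unfolding R_deg_def by blast
  have ksn: "ks w \<subseteq> {1..n}" using std_sub[OF sc w(2)] .
  have "mon_deg w = (\<Sum>v\<in>ks w. lk w v)" unfolding mon_deg_def ..
  also have "\<dots> \<le> (\<Sum>v\<in>ks w. d + 1)" using w(2) unfolding std_def by (intro sum_mono) auto
  also have "\<dots> = card (ks w) * (d + 1)" by simp
  also have "\<dots> \<le> n * (d + 1)" by (intro mult_right_mono) (use card_mono[OF _ ksn] in auto)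
  finally show ?thesis using dw by simp
qed

lemma count_ineq:
  assumes sc: "simplicial_complex n \<Delta>" and dd: "d = sc_dim \<Delta>" and d0: "d > 0"
    and fv: "fvec \<Delta> (d - 1) \<ge> fvec \<Delta> d" and T: "2 * T = (d + 1) * (d + 2)"
  shows "card (StdD \<Delta> d T) \<le> card (StdD \<Delta> d (T - 1))"
proof -
  have fD: "finite \<Delta>" using sc unfolding simplicial_complex_def
    by (meson finite_atLeastAtMost finite_Pow_iff rev_finite_subset subsetI PowI)
  have ne: "\<Delta> \<noteq> {}" using sc unfolding simplicial_complex_def by blast
  have T1: "T \<ge> 1" using T by (cases T) auto
  have Mx: "Max (card ` \<Delta>) = d + 1" using dd d0 unfolding sc_dim_def by simp
  have cle: "card G \<le> d + 1" if "G \<in> \<Delta>" for G using Max_ge[of "card ` \<Delta>" "card G"] fD that Mx by simp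
  define x where "x = int T - 1"
  have iT: "int (T - 1) = x" "int T = x + 1" using T1 unfolding x_def by auto
  have x2: "2 * x = int d * int d + 3 * int d"
  proof -
    have "2 * int T = (int d + 1) * (int d + 2)" using arg_cong[OF T, of int] by (simp add: algebra_simps)
    then show ?thesis unfolding x_def by (simp add: algebra_simps)
  qed
  define h where "h c = int (NN d c x) - int (NN d c (x + 1))" for c
  define e where "e = h d"
  have hge: "h c \<ge> 0" if "c \<le> d" for c
  proof -
    have "int c * (int d + 2) \<le> int d * (int d + 2)" using that by (intro mult_right_mono) auto
    then have "2 * x \<ge> int c * (int d + 2)" using x2 by (simp add: algebra_simps)
    then show ?thesis unfolding h_def using NN_mono[of c d x] by simp
  qed
  have hd1: "h (d + 1) = - e"
  proof -
    have "2 * (x + 1) = (int d + 1) * (int d + 2)" using x2 by (simp add: algebra_simps)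
    from NN_key[OF this] show ?thesis unfolding e_def h_def by simp
  qed
  define g where "g c = (if c = d then e else if c = d + 1 then - e else 0)" for c
  have hg: "g (card G) \<le> h (card G)" if "G \<in> \<Delta>" for G
    using cle[OF that] hge[of "card G"] hd1 unfolding g_def e_def by (auto simp: le_Suc_eq)
  have "(\<Sum>G\<in>\<Delta>. g (card G)) = (\<Sum>G\<in>\<Delta>. if card G = d then e else 0) + (\<Sum>G\<in>\<Delta>. if card G = d + 1 then - e else 0)"
    unfolding g_def sum.distrib[symmetric] by (rule sum.cong) auto
  also have "\<dots> = e * int (card {G\<in>\<Delta>. card G = d}) - e * int (card {G\<in>\<Delta>. card G = d + 1})"
    using fD by (simp add: sum.inter_filter[symmetric])
  also have "\<dots> = e * (int (fvec \<Delta> (d - 1)) - int (fvec \<Delta> d))"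
    unfolding fvec_def using d0 by (simp add: algebra_simps)
  finally have gs: "(\<Sum>G\<in>\<Delta>. g (card G)) = e * (int (fvec \<Delta> (d - 1)) - int (fvec \<Delta> d))" .
  have "e \<ge> 0" unfolding e_def using hge by simp
  then have "(\<Sum>G\<in>\<Delta>. g (card G)) \<ge> 0" unfolding gs using fv by simp
  also have "(\<Sum>G\<in>\<Delta>. g (card G)) \<le> (\<Sum>G\<in>\<Delta>. h (card G))" by (rule sum_mono) (rule hg)
  finally have "0 \<le> (\<Sum>G\<in>\<Delta>. h (card G))" .
  then have "(\<Sum>G\<in>\<Delta>. int (NN d (card G) (x + 1))) \<le> (\<Sum>G\<in>\<Delta>. int (NN d (card G) x))"
    unfolding h_def by (simp add: sum_subtractf)
  then have "int (\<Sum>G\<in>\<Delta>. NN d (card G) (int T)) \<le> int (\<Sum>G\<in>\<Delta>. NN d (card G) (int (T - 1)))"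
    unfolding iT by simp
  then show ?thesis using card_StdD[OF sc, of d T] card_StdD[OF sc, of d "T - 1"] by linarith
qed

lemma left_null_imp_right_null:
  fixes M :: "'b \<Rightarrow> 'a \<Rightarrow> 'k::field" and y :: "'b \<Rightarrow> 'k"
  assumes fA: "finite A" and fB: "finite B" and cB: "card B \<le> card A"
    and yne: "\<exists>b\<in>B. y b \<noteq> 0"
    and ly: "\<forall>a\<in>A. (\<Sum>b\<in>B. y b * M b a) = 0"
  shows "\<exists>x. (\<exists>a\<in>A. x a \<noteq> 0) \<and> (\<forall>b\<in>B. (\<Sum>a\<in>A. M b a * x a) = 0)"
proof -
  obtain \<alpha> where \<alpha>: "bij_betw \<alpha> {0..<card A} A" using ex_bij_betw_nat_finite[OF fA] by blast
  obtain \<beta> where \<beta>: "bij_betw \<beta> {0..<card B} B" using ex_bij_betw_nat_finite[OF fB] by blast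
  define N where "N = card A"
  define Mt :: "'k mat" where "Mt = mat N N (\<lambda>(i,j). if i < card B then M (\<beta> i) (\<alpha> j) else 0)"
  define yv :: "'k vec" where "yv = vec N (\<lambda>i. if i < card B then y (\<beta> i) else 0)"
  have Mc: "Mt \<in> carrier_mat N N" unfolding Mt_def by simp
  have MTc: "transpose_mat Mt \<in> carrier_mat N N" unfolding Mt_def by simp
  have yvc: "yv \<in> carrier_vec N" unfolding yv_def by simp
  have yvnz: "yv \<noteq> 0\<^sub>v N"
  proof
    assume h: "yv = 0\<^sub>v N"
    obtain b where b: "b \<in> B" "y b \<noteq> 0" using yne by blast
    obtain i where i: "i < card B" "\<beta> i = b" using \<beta> b(1) unfolding bij_betw_def by force
    have "i < N" using i cB N_def by simp
    then have "yv $ i = 0" using h by simp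
    then show False using i b \<open>i < N\<close> unfolding yv_def by simp
  qed
  have "transpose_mat Mt *\<^sub>v yv = 0\<^sub>v N"
  proof (rule eq_vecI)
    fix j assume j: "j < dim_vec (0\<^sub>v N :: 'k vec)"
    then have jN: "j < N" by simp
    have "(transpose_mat Mt *\<^sub>v yv) $ j = (\<Sum>i<N. Mt $$ (i, j) * yv $ i)"
      using jN Mc yvc unfolding mult_mat_vec_def scalar_prod_def
      by (simp add: sum.atLeast0_lessThan_Suc lessThan_atLeast0 mult.commute)
    also have "\<dots> = (\<Sum>i<card B. y (\<beta> i) * M (\<beta> i) (\<alpha> j))"
    proof -
      have "(\<Sum>i<N. Mt $$ (i, j) * yv $ i) = (\<Sum>i<card B. Mt $$ (i, j) * yv $ i)"
        apply (rule sum.mono_neutral_right)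
        using cB N_def jN by (auto simp: Mt_def yv_def)
      also have "\<dots> = (\<Sum>i<card B. y (\<beta> i) * M (\<beta> i) (\<alpha> j))"
        apply (rule sum.cong) using cB N_def jN by (auto simp: Mt_def yv_def)
      finally show ?thesis .
    qed
    also have "\<dots> = (\<Sum>b\<in>B. y b * M b (\<alpha> j))"
      using sum.reindex_bij_betw[OF \<beta>, of "\<lambda>b. y b * M b (\<alpha> j)"] by (simp add: lessThan_atLeast0)
    also have "\<dots> = 0" using ly \<alpha> jN N_def unfolding bij_betw_def by auto
    finally show "(transpose_mat Mt *\<^sub>v yv) $ j = 0\<^sub>v N $ j" using jN by simp
  next
    show "dim_vec (transpose_mat Mt *\<^sub>v yv) = dim_vec (0\<^sub>v N :: 'k vec)" using MTc by simp
  qed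
  then have "det (transpose_mat Mt) = 0"
    using det_0_iff_vec_prod_zero_field[OF MTc] yvc yvnz by blast
  then have "det Mt = 0" using det_transpose[OF Mc] by simp
  then obtain v where v: "v \<in> carrier_vec N" "v \<noteq> 0\<^sub>v N" "Mt *\<^sub>v v = 0\<^sub>v N"
    using det_0_iff_vec_prod_zero_field[OF Mc] by blast
  define x where "x = (\<lambda>a. v $ (the_inv_into {0..<card A} \<alpha> a))"
  have xa: "x (\<alpha> j) = v $ j" if "j < N" for j
    unfolding x_def using that N_def the_inv_into_f_f[of \<alpha> "{0..<card A}" j] \<alpha>
    unfolding bij_betw_def by auto
  show ?thesis
  proof (intro exI conjI)
    show "\<exists>a\<in>A. x a \<noteq> 0"
    proof (rule ccontr)
      assume "\<not> ?thesis"
      then have "\<forall>j<N. v $ j = 0" using xa \<alpha> N_def unfolding bij_betw_def by force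
      then have "v = 0\<^sub>v N" using v(1) by (intro eq_vecI) auto
      then show False using v(2) by simp
    qed
    show "\<forall>b\<in>B. (\<Sum>a\<in>A. M b a * x a) = 0"
    proof
      fix b assume b: "b \<in> B"
      obtain i where i: "i < card B" "\<beta> i = b" using \<beta> b unfolding bij_betw_def by force
      have iN: "i < N" using i cB N_def by simp
      have "0 = (Mt *\<^sub>v v) $ i" using v(3) iN by simp
      also have "\<dots> = (\<Sum>j<N. Mt $$ (i, j) * v $ j)"
        using iN Mc v(1) unfolding mult_mat_vec_def scalar_prod_def
        by (simp add: lessThan_atLeast0)
      also have "\<dots> = (\<Sum>j<N. M b (\<alpha> j) * x (\<alpha> j))"
        apply (rule sum.cong) using i iN xa by (auto simp: Mt_def)
      also have "\<dots> = (\<Sum>a\<in>A. M b a * x a)"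
        using sum.reindex_bij_betw[OF \<alpha>, of "\<lambda>a. M b a * x a"] N_def by (simp add: lessThan_atLeast0)
      finally show "(\<Sum>a\<in>A. M b a * x a) = 0" by simp
    qed
  qed
qed

theorem theorem6p7:
  fixes \<Delta> :: "nat set set" and n d :: nat and J :: "'k::field mpoly set"
  assumes "simplicial_complex n \<Delta>"
    and "d = sc_dim \<Delta>" and "d > 0"
    and "fvec \<Delta> (d - 1) \<ge> fvec \<Delta> d"
    and "reduced_homology_nonzero TYPE('k) \<Delta> d"
    and "J = ideal_gen n (SR_gens n \<Delta> \<union> {Var i ^ (d + 2) | i. i \<in> {1..n}})"
  shows "\<not> has_WLP n J"
proof
  assume wlp: "has_WLP n J"
  note sc = assms(1)
  have Jd: "J = ideal_gen n (Gens n \<Delta> d)" using assms(6) unfolding Gens_def by simp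
  obtain l where l: "l \<in> R_deg n 1"
    and lw: "\<forall>i < top_degree n J. mult_injective n J l i \<or> mult_surjective n J l i"
    using wlp unfolding has_WLP_def by blast
  obtain z :: "nat set \<Rightarrow> 'k" where ch: "is_chain \<Delta> d z" and bd: "boundary \<Delta> d z = (\<lambda>_. 0)"
    and nb: "\<not> (\<exists>b :: nat set \<Rightarrow> 'k. is_chain \<Delta> (d + 1) b \<and> boundary \<Delta> (d + 1) b = z)"
    using assms(5) unfolding reduced_homology_nonzero_def by blast
  have "\<exists>F0. z F0 \<noteq> 0"
  proof (rule ccontr)
    assume "\<not> ?thesis"
    then have z0: "z = (\<lambda>_. 0)" by auto
    have "is_chain \<Delta> (d + 1) (\<lambda>_. 0 :: 'k)" unfolding is_chain_def by simp
    moreover have "boundary \<Delta> (d + 1) (\<lambda>_. 0 :: 'k) = z" unfolding boundary_def z0 by (auto simp: fun_eq_iff intro!: sum.neutral)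
    ultimately show False using nb by blast
  qed
  then obtain F0 where zF0: "z F0 \<noteq> 0" by blast
  have F0: "F0 \<in> \<Delta>" "card F0 = d + 1" using chain_face[OF ch zF0] by auto
  have fF0: "finite F0" using sc_sub[OF sc F0(1)] finite_subset by blast
  obtain h where h: "bij_betw h F0 {0..<card F0}" using ex_bij_betw_finite_nat[OF fF0] by blast
  define m0 where "m0 = Abs_poly_mapping (\<lambda>v. if v \<in> F0 then h v + 1 else 0)"
  have lm0: "lk m0 v = (if v \<in> F0 then h v + 1 else 0)" for v
  proof -
    have "finite {v. (if v \<in> F0 then h v + 1 else 0) \<noteq> (0::nat)}"
      by (rule finite_subset[OF _ fF0]) auto
    then show ?thesis unfolding m0_def by simp
  qed
  have km0: "ks m0 = F0" by (auto simp: in_keys_iff lm0 split: if_splits)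
  have "lk m0 ` F0 = (\<lambda>x. x + 1) ` (h ` F0)" by (auto simp: lm0 image_image)
  also have "\<dots> = {1..d+1}" using h F0(2) unfolding bij_betw_def by (auto simp: image_iff)
  finally have pm0: "pm d m0" unfolding pm_def using km0 F0(2) by simp
  have psi0: "psi z d m0 \<noteq> 0" unfolding psi_def using pm0 km0 zF0 by simp
  define T where "T = (d + 1) * (d + 2) div 2"
  have T2: "2 * T = (d + 1) * (d + 2)" unfolding T_def by simp
  have T1: "T \<ge> 1" using T2 by (cases T) auto
  have psiT: "mon_deg m = T" if "psi z d m \<noteq> 0" for m using psi_support(2)[OF ch sc that] T2 by simp
  define av where "av v = lk l (ev v)" for v
  have lexp: "l = (\<Sum>v\<in>{1..n}. sg (ev v) (av v))" unfolding av_def by (rule lin_expand[OF l])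
  define S where "S = {v\<in>{1..n}. av v \<noteq> 0}"
  define Z where "Z = {v\<in>{1..n}. av v = 0}"
  have fZ: "finite Z" unfolding Z_def by simp
  define KS where "KS = zdeg Z ` {m. psi z d m \<noteq> 0}"
  have "KS \<subseteq> {0..card Z * (d + 1)}"
  proof
    fix k assume "k \<in> KS"
    then obtain m where m: "psi z d m \<noteq> 0" "k = zdeg Z m" unfolding KS_def by blast
    have "std \<Delta> d m" using psi_support(1)[OF ch sc m(1)] .
    then have "zdeg Z m \<le> (\<Sum>v\<in>Z. d + 1)" unfolding zdeg_def std_def by (intro sum_mono) auto
    then show "k \<in> {0..card Z * (d + 1)}" using m by simp
  qed
  then have fKS: "finite KS" by (rule finite_subset) simp
  have neKS: "KS \<noteq> {}" unfolding KS_def using psi0 by blast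
  define K0 where "K0 = Max KS"
  have bound: "\<forall>m. psi z d m \<noteq> 0 \<longrightarrow> zdeg Z m \<le> K0"
    unfolding K0_def KS_def using fKS KS_def by auto
  obtain m1 where m1: "psi z d m1 \<noteq> 0" "zdeg Z m1 = K0"
    using Max_in[OF fKS neKS] unfolding K0_def KS_def by auto
  define \<phi> where "\<phi> = phiw z d av S Z K0"
  have fS: "finite S" unfolding S_def by simp
  have phim1: "\<phi> m1 \<noteq> 0"
    unfolding \<phi>_def phiw_def using m1 fS by (simp add: S_def)
  define W where "W = StdD \<Delta> d T"
  have fW: "finite W" unfolding W_def using card_StdD[OF sc] by blast
  have Wstd: "\<forall>w\<in>W. std \<Delta> d w" unfolding W_def StdD_def by blast
  have sup: "\<forall>w. \<phi> w \<noteq> 0 \<longrightarrow> w \<in> W"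
  proof (intro allI impI)
    fix w assume "\<phi> w \<noteq> 0"
    then have "psi z d w \<noteq> 0" unfolding \<phi>_def phiw_def by auto
    then show "w \<in> W" unfolding W_def StdD_def using psi_support(1)[OF ch sc] psiT by blast
  qed
  have kill: "\<forall>b. (\<Sum>v\<in>{1..n}. av v * \<phi> (b + ev v)) = 0"
    unfolding \<phi>_def using phiw_kill[OF sc ch bd S_def Z_def bound] by blast
  have PhiL: "PhiF W \<phi> (l * (\<Sum>a\<in>A. sg a (c a))) = 0" for A c
    by (rule PhiF_lp[OF fW sup kill lexp refl])
  have m1W: "m1 \<in> W" using sup phim1 by blast
  have m1std: "std \<Delta> d m1" using Wstd m1W by blast
  have m1sub: "ks m1 \<subseteq> {1..n}" using std_sub[OF sc m1std] .
  have qT: "quot_nonzero_deg n J T"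
  proof -
    have "(sg m1 (1::'k)) \<in> R_deg n T"
      unfolding R_deg_def using m1sub psiT[OF m1(1)] by (auto simp: in_R_def)
    moreover have "sg m1 (1::'k) \<notin> J"
      using J_keys_nonstd[OF sc, of "sg m1 (1::'k)" d m1] m1std Jd by auto
    ultimately show ?thesis unfolding quot_nonzero_deg_def by blast
  qed
  have "T \<le> top_degree n J"
    unfolding top_degree_def
    by (rule Greatest_le_nat[where P = "quot_nonzero_deg n J", OF qT]) (use quot_bound[OF sc] Jd in blast)
  then have Tlt: "T - 1 < top_degree n J" using T1 by simp
  have ns: "\<not> mult_surjective n J l (T - 1)"
  proof
    assume "mult_surjective n J l (T - 1)"
    moreover have "sg m1 (1::'k) \<in> R_deg n (T - 1 + 1)"
      unfolding R_deg_def using m1sub psiT[OF m1(1)] T1 by (auto simp: in_R_def)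
    ultimately obtain f where f: "f \<in> R_deg n (T - 1)" "sg m1 1 - l * f \<in> J"
      unfolding mult_surjective_def by blast
    have "PhiF W \<phi> (sg m1 1 - l * f) = 0" using PhiF_J[OF sc Wstd] f(2) Jd by blast
    moreover have "PhiF W \<phi> (l * f) = 0"
      using PhiL[of "\<lambda>a. lk f a" "ks f"] poly_expand[of f] by simp
    moreover have "PhiF W \<phi> (sg m1 1) = \<phi> m1" using PhiF_single[OF fW sup] by simp
    ultimately show False using phim1 by (simp add: PhiF_diff)
  qed
  define A where "A = StdD \<Delta> d (T - 1)"
  have fA: "finite A" unfolding A_def using card_StdD[OF sc] by blast
  have cBA: "card W \<le> card A" unfolding W_def A_def by (rule count_ineq[OF sc assms(2,3,4) T2])
  have ly: "\<forall>a\<in>A. (\<Sum>b\<in>W. \<phi> b * Mf {1..n} av b a) = 0"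
  proof
    fix a assume "a \<in> A"
    have "0 = PhiF W \<phi> (l * (\<Sum>a'\<in>{a}. sg a' 1))" by (rule PhiL[symmetric])
    also have "\<dots> = (\<Sum>b\<in>W. \<phi> b * Mf {1..n} av b a)"
      unfolding PhiF_def lk_lmult[OF lexp] by simp
    finally show "(\<Sum>b\<in>W. \<phi> b * Mf {1..n} av b a) = 0" by simp
  qed
  obtain x where x: "\<exists>a\<in>A. x a \<noteq> 0" "\<forall>b\<in>W. (\<Sum>a\<in>A. Mf {1..n} av b a * x a) = 0"
    using left_null_imp_right_null[OF fA fW cBA _ ly] phim1 m1W by blast
  define f where "f = (\<Sum>a\<in>A. sg a (x a))"
  have lkf: "lk f a' = (if a' \<in> A then x a' else 0)" for a'
    unfolding f_def using fA by (simp add: lookup_sum lookup_single when_def)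
  have ksf: "ks f \<subseteq> A" by (auto simp: in_keys_iff lkf split: if_splits)
  have Astd: "\<forall>a\<in>A. std \<Delta> d a \<and> mon_deg a = T - 1" unfolding A_def StdD_def by blast
  have inRf: "in_R n f" unfolding in_R_def using ksf Astd std_sub[OF sc] by blast
  have fR: "f \<in> R_deg n (T - 1)" unfolding R_deg_def using inRf ksf Astd by blast
  have fnJ: "f \<notin> J"
  proof
    assume "f \<in> J"
    obtain a0 where a0: "a0 \<in> A" "x a0 \<noteq> 0" using x(1) by blast
    then have "a0 \<in> ks f" by (simp add: in_keys_iff lkf)
    then show False using J_keys_nonstd[OF sc] \<open>f \<in> J\<close> Jd Astd a0(1) by blast
  qed
  have inRl: "in_R n l" using l unfolding R_deg_def by blast
  have lfJ: "l * f \<in> J"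
  proof -
    have "\<not> std \<Delta> d w" if w: "w \<in> ks (l * f)" for w
    proof
      assume sw: "std \<Delta> d w"
      obtain k a where ka: "w = k + a" "k \<in> ks l" "a \<in> ks f" using keys_mult[of l f] w by blast
      have "mon_deg k = 1" using l ka(2) unfolding R_deg_def by blast
      moreover have "mon_deg a = T - 1" using ka(3) ksf Astd by blast
      ultimately have "mon_deg w = T" using ka(1) mon_deg_add[of k a] T1 by simp
      then have "w \<in> W" unfolding W_def StdD_def using sw by blast
      then have "lk (l * f) w = 0"
        unfolding f_def lk_lmult[OF lexp] using x(2) by (simp add: mult.commute)
      then show False using w by (simp add: in_keys_iff)
    qed
    then show ?thesis using nonstd_in_J[OF sc in_R_mult[OF inRl inRf]] Jd by blast
  qed
  have ni: "\<not> mult_injective n J l (T - 1)"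
    unfolding mult_injective_def using fR fnJ lfJ by blast
  show False using lw Tlt ns ni by blast
qed

end
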